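(* Let $d\ge2$ and $p\in[0,1]$. With systems $A'_1,A'_2,A_1,A_2,\tilde A,B$ (each $\mathbb{C}^d$), an arbitrary state $\rho_{\tilde AB}$, a POVM $\{M^{(i)}\}_{i=1}^K$ on $A_1A_2\tilde A$, unitaries $U^{(i,j)}_B$ ($j=1,2$), $\Omega=\psi^+_{A'_1A_1}\otimes\psi^+_{A'_2A_2}\otimes\rho_{\tilde AB}$, and $$F_j=\sum_{i=1}^{K}\operatorname{tr}\Big[\psi^+_{A'_jB}\,U^{(i,j)}_B\,\operatorname{tr}_{A_1A_2\tilde AA'_{\bar j}}\big[(M^{(i)}\otimes\mathbf 1)\,\Omega\big]\,U^{(i,j)\dagger}_B\Big]\quad(\bar j\ne j),$$ one has $$pF_1+(1-p)F_2\le\frac12\left(1+\sqrt{1+\frac{4(d^2-1)(p-1)p}{d^2}}\right).$$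
   Context: $\psi^+_{XY}$ denotes the maximally entangled state $|\psi^+\rangle\langle\psi^+|$ with $|\psi^+\rangle=\frac1{\sqrt d}\sum_{i=0}^{d-1}|ii\rangle$. This is the asymmetric constrained-entanglement random access code with two $d$-dimensional inputs, where Bob is asked for input 1 with probability $p$ and input 2 with probability $1-p$; $pF_1+(1-p)F_2$ is the success probability. *)

theory Defs
  imports Complex_Main
begin

text \<open>Finite-dimensional operators are represented by their matrix entries with
respect to the computational basis: an operator on a system with basis labels
in the finite set I is a function X :: 'i => 'i => complex (only entries with
indices in I matter).\<close>

type_synonym 'i op = "'i \<Rightarrow> 'i \<Rightarrow> complex"

definition mmul :: "'i set \<Rightarrow> 'i op \<Rightarrow> 'i op \<Rightarrow> 'i op" where
  "mmul I X Y = (\<lambda>x z. \<Sum>y\<in>I. X x y * Y y z)"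

definition adj :: "'i op \<Rightarrow> 'i op" where
  "adj X = (\<lambda>x y. cnj (X y x))"

definition idop :: "'i op" where
  "idop = (\<lambda>x y. if x = y then 1 else 0)"

definition trace :: "'i set \<Rightarrow> 'i op \<Rightarrow> complex" where
  "trace I X = (\<Sum>x\<in>I. X x x)"

definition psd :: "'i set \<Rightarrow> 'i op \<Rightarrow> bool" where
  "psd I X = (\<forall>v :: 'i \<Rightarrow> complex.
      Im (\<Sum>x\<in>I. \<Sum>y\<in>I. cnj (v x) * X x y * v y) = 0 \<and>
      Re (\<Sum>x\<in>I. \<Sum>y\<in>I. cnj (v x) * X x y * v y) \<ge> 0)"

definition is_state :: "'i set \<Rightarrow> 'i op \<Rightarrow> bool" where
  "is_state I \<rho> = (psd I \<rho> \<and> trace I \<rho> = 1)"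

definition unitary_op :: "'i set \<Rightarrow> 'i op \<Rightarrow> bool" where
  "unitary_op I U = (\<forall>x\<in>I. \<forall>y\<in>I. mmul I (adj U) U x y = idop x y \<and> mmul I U (adj U) x y = idop x y)"

text \<open>POVM with K outcomes M 0, ..., M (K-1) (the paper's M^(1..K)).\<close>
definition povm :: "'i set \<Rightarrow> nat \<Rightarrow> (nat \<Rightarrow> 'i op) \<Rightarrow> bool" where
  "povm I K M = ((\<forall>i<K. psd I (M i)) \<and> (\<forall>x\<in>I. \<forall>y\<in>I. (\<Sum>i<K. M i x y) = idop x y))"

abbreviation D :: "nat \<Rightarrow> nat set" where "D d \<equiv> {..<d}"

text \<open>Maximally entangled state psi+ on two copies of C^d:
  entries <ab|psi+><psi+|a'b'> = (1/d) [a=b][a'=b'].\<close>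
definition psi_plus :: "nat \<Rightarrow> (nat \<times> nat) op" where
  "psi_plus d = (\<lambda>(a, b) (a', b'). if a = b \<and> a' = b' then 1 / of_nat d else 0)"

text \<open>The six systems, ordered as (A'_1, A'_2, A_1, A_2, A~, B).\<close>
type_synonym idx6 = "nat \<times> nat \<times> nat \<times> nat \<times> nat \<times> nat"

definition Sys6 :: "nat \<Rightarrow> idx6 set" where
  "Sys6 d = D d \<times> D d \<times> D d \<times> D d \<times> D d \<times> D d"

text \<open>Omega = psi+_{A'_1 A_1} (x) psi+_{A'_2 A_2} (x) rho_{A~ B}; rho indexed by (A~, B).\<close>
definition Omega :: "nat \<Rightarrow> (nat \<times> nat) op \<Rightarrow> idx6 op" where
  "Omega d \<rho> = (\<lambda>(p1, p2, a1, a2, t, b) (q1, q2, c1, c2, s, e).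
      psi_plus d (p1, a1) (q1, c1) * psi_plus d (p2, a2) (q2, c2) * \<rho> (t, b) (s, e))"

text \<open>M (x) 1, with M acting on (A_1, A_2, A~) and identity on (A'_1, A'_2, B).\<close>
definition Mext :: "(nat \<times> nat \<times> nat) op \<Rightarrow> idx6 op" where
  "Mext M = (\<lambda>(p1, p2, a1, a2, t, b) (q1, q2, c1, c2, s, e).
      M (a1, a2, t) (c1, c2, s) * idop (p1, p2, b) (q1, q2, e))"

text \<open>Partial trace over A_1 A_2 A~ A'_{jbar}, leaving an operator on (A'_j, B).\<close>
definition reduce :: "nat \<Rightarrow> nat \<Rightarrow> idx6 op \<Rightarrow> (nat \<times> nat) op" where
  "reduce d j X = (\<lambda>(p, b) (q, e).
     if j = 1 then
       (\<Sum>r\<in>D d. \<Sum>a1\<in>D d. \<Sum>a2\<in>D d. \<Sum>t\<in>D d. X (p, r, a1, a2, t, b) (q, r, a1, a2, t, e))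
     else
       (\<Sum>r\<in>D d. \<Sum>a1\<in>D d. \<Sum>a2\<in>D d. \<Sum>t\<in>D d. X (r, p, a1, a2, t, b) (r, q, a1, a2, t, e)))"

text \<open>Conjugation of an operator on (A'_j, B) by a unitary acting on B:
  (1 (x) U) X (1 (x) U)^dagger.\<close>
definition conjB :: "nat \<Rightarrow> nat op \<Rightarrow> (nat \<times> nat) op \<Rightarrow> (nat \<times> nat) op" where
  "conjB d U X = (\<lambda>(p, b) (q, e).
     \<Sum>b'\<in>D d. \<Sum>e'\<in>D d. U b b' * X (p, b') (q, e') * cnj (U e e'))"

definition Fj :: "nat \<Rightarrow> (nat \<times> nat) op \<Rightarrow> nat \<Rightarrow> (nat \<Rightarrow> (nat \<times> nat \<times> nat) op)
                  \<Rightarrow> (nat \<Rightarrow> nat \<Rightarrow> nat op) \<Rightarrow> nat \<Rightarrow> complex" where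
  "Fj d \<rho> K M U j = (\<Sum>i<K. trace (D d \<times> D d)
      (mmul (D d \<times> D d) (psi_plus d)
         (conjB d (U i j) (reduce d j (mmul (Sys6 d) (Mext (M i)) (Omega d \<rho>))))))"

end

theory Submission
  imports Defs
begin
definition qf :: "'i set \<Rightarrow> 'i op \<Rightarrow> ('i \<Rightarrow> complex) \<Rightarrow> complex" where
  "qf I X v = (\<Sum>x\<in>I. \<Sum>y\<in>I. cnj (v x) * X x y * v y)"

lemma psd_qf: "psd I X \<Longrightarrow> Im (qf I X v) = 0 \<and> Re (qf I X v) \<ge> 0"
  unfolding psd_def qf_def by blast

lemma lin2:
  assumes "finite I" "x \<in> I" "z \<in> I"
  shows "(\<Sum>y\<in>I. g y * (a * idop x y + b * idop z y)) = g x * a + g z * b"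
proof -
  have "(\<Sum>y\<in>I. g y * (a * idop x y + b * idop z y)) =
     (\<Sum>y\<in>I. (if y = x then g y * a else 0)) + (\<Sum>y\<in>I. (if y = z then g y * b else 0))"
    unfolding sum.distrib[symmetric] by (rule sum.cong) (auto simp: idop_def ring_distribs)
  also have "\<dots> = g x * a + g z * b" using assms by simp
  finally show ?thesis .
qed

lemma qf_two:
  assumes "finite I" "x \<in> I" "y \<in> I"
  shows "qf I X (\<lambda>z. a * idop x z + b * idop y z) =
     cnj a * a * X x x + cnj a * b * X x y + cnj b * a * X y x + cnj b * b * X y y"
proof -
  have c: "cnj (a * idop x z + b * idop y z) = cnj a * idop x z + cnj b * idop y z" for z
    by (simp add: idop_def)
  have "qf I X (\<lambda>z. a * idop x z + b * idop y z) =
     (\<Sum>x'\<in>I. (cnj a * idop x x' + cnj b * idop y x') * (X x' x * a + X x' y * b))"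
    unfolding qf_def c
    by (rule sum.cong[OF refl]) (subst lin2[OF assms, symmetric], simp add: sum_distrib_left mult.assoc)
  also have "\<dots> = (\<Sum>x'\<in>I. (X x' x * a + X x' y * b) * (cnj a * idop x x' + cnj b * idop y x'))"
    by (simp add: mult.commute)
  also have "\<dots> = cnj a * a * X x x + cnj a * b * X x y + cnj b * a * X y x + cnj b * b * X y y"
    by (subst lin2[OF assms]) (simp add: algebra_simps)
  finally show ?thesis .
qed

lemma psd_diag:
  assumes "psd I X" "finite I" "x \<in> I"
  shows "Im (X x x) = 0" "Re (X x x) \<ge> 0"
proof -
  have "qf I X (\<lambda>z. 1 * idop x z + 0 * idop x z) = X x x"
    using qf_two[OF assms(2,3,3), of X 1 0] by simp
  then show "Im (X x x) = 0" "Re (X x x) \<ge> 0" using psd_qf[OF assms(1)] by metis+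
qed

lemma psd_herm:
  assumes "psd I X" "finite I" "x \<in> I" "y \<in> I"
  shows "X y x = cnj (X x y)"
proof -
  have d1: "Im (X x x) = 0" and d2: "Im (X y y) = 0" using psd_diag assms by metis+
  have "Im (qf I X (\<lambda>z. 1 * idop x z + 1 * idop y z)) = 0" using psd_qf[OF assms(1)] by blast
  then have e1: "Im (X x y) + Im (X y x) = 0"
    using qf_two[OF assms(2,3,4), of X 1 1] d1 d2 by simp
  have "Im (qf I X (\<lambda>z. 1 * idop x z + \<i> * idop y z)) = 0" using psd_qf[OF assms(1)] by blast
  then have e2: "Re (X x y) - Re (X y x) = 0"
    using qf_two[OF assms(2,3,4), of X 1 \<i>] d1 d2 by simp
  show ?thesis using e1 e2 by (simp add: complex_eq_iff)
qed

lemma qf_insert: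
  assumes "finite J" "a \<notin> J"
  shows "qf (insert a J) X v = qf J X v + cnj (v a) * (\<Sum>y\<in>J. X a y * v y)
     + (\<Sum>x\<in>J. cnj (v x) * X x a) * v a + cnj (v a) * X a a * v a"
  using assms by (simp add: qf_def sum.distrib sum_distrib_left sum_distrib_right algebra_simps)

lemma psd_restrict:
  assumes "psd (insert a J) X" "finite J" "a \<notin> J"
  shows "psd J X"
  unfolding psd_def
proof
  fix v :: "_ \<Rightarrow> complex"
  have "qf (insert a J) X (v(a:=0)) = qf J X (v(a:=0))"
    using qf_insert[OF assms(2,3)] by simp
  also have "\<dots> = qf J X v" unfolding qf_def using assms(3)
    by (intro sum.cong refl) auto
  finally show "Im (\<Sum>x\<in>J. \<Sum>y\<in>J. cnj (v x) * X x y * v y) = 0 \<and>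
      0 \<le> Re (\<Sum>x\<in>J. \<Sum>y\<in>J. cnj (v x) * X x y * v y)"
    using psd_qf[OF assms(1), of "v(a:=0)"] unfolding qf_def by simp
qed

lemma psd_zero_row:
  assumes "psd I X" "finite I" "a \<in> I" "y \<in> I" "X a a = 0"
  shows "X a y = 0"
proof (rule ccontr)
  assume nz: "X a y \<noteq> 0"
  have yx: "X y a = cnj (X a y)" using psd_herm assms by metis
  define m where "m = (Re (X a y))^2 + (Im (X a y))^2"
  have mpos: "m > 0" using nz by (simp add: m_def complex_eq_iff sum_power2_gt_zero_iff)
  define s where "s = (Re (X y y) + 1) / (2 * m)"
  define t where "t = - complex_of_real s * X a y"
  have "Re (qf I X (\<lambda>z. t * idop a z + 1 * idop y z)) \<ge> 0" using psd_qf[OF assms(1)] by blast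
  also have "qf I X (\<lambda>z. t * idop a z + 1 * idop y z) = cnj t * X a y + t * cnj (X a y) + X y y"
    using qf_two[OF assms(2,3,4), of X t 1] assms(5) yx by simp
  also have "Re \<dots> = - 2 * s * m + Re (X y y)"
    by (simp add: t_def m_def power2_eq_square algebra_simps)
  also have "\<dots> = -1" using mpos by (simp add: s_def field_simps)
  finally show False by simp
qed

lemma psd_decomp:
  assumes "finite I" "psd I X"
  shows "\<exists>n (u :: nat \<Rightarrow> 'a \<Rightarrow> complex). \<forall>x\<in>I. \<forall>y\<in>I. X x y = (\<Sum>k<n. u k x * cnj (u k y))"
  using assms
proof (induction I arbitrary: X rule: finite_induct)
  case empty
  then show ?case by auto
next
  case (insert a J)
  have fin: "finite (insert a J)" using insert by simp
  have pJ: "psd J X" using psd_restrict insert by metis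
  have aI: "a \<in> insert a J" by simp
  have herm: "\<And>x y. x \<in> insert a J \<Longrightarrow> y \<in> insert a J \<Longrightarrow> X y x = cnj (X x y)"
    using psd_herm[OF insert(4) fin] by metis
  have dIm: "Im (X a a) = 0" and dRe: "Re (X a a) \<ge> 0" using psd_diag[OF insert(4) fin aI] by auto
  show ?case
  proof (cases "X a a = 0")
    case True
    have row: "X a y = 0" if "y \<in> insert a J" for y
      using psd_zero_row[OF insert(4) fin aI that True] .
    have col: "X y a = 0" if "y \<in> insert a J" for y
      using herm[OF aI that] row[OF that] by simp
    obtain n and u :: "nat \<Rightarrow> _ \<Rightarrow> complex" where u: "\<forall>x\<in>J. \<forall>y\<in>J. X x y = (\<Sum>k<n. u k x * cnj (u k y))"
      using insert(3)[OF pJ] by blast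
    show ?thesis
    proof (rule exI[of _ n], rule exI[of _ "\<lambda>k. (u k)(a := 0)"], intro ballI)
      fix x y assume xI: "x \<in> insert a J" and yI: "y \<in> insert a J"
      show "X x y = (\<Sum>k<n. ((u k)(a := 0)) x * cnj (((u k)(a := 0)) y))"
      proof (cases "x = a \<or> y = a")
        case True
        then show ?thesis using row[OF yI] col[OF xI] by auto
      next
        case False
        then have "x \<in> J" "y \<in> J" using xI yI by auto
        then have "X x y = (\<Sum>k<n. u k x * cnj (u k y))" by (rule u[rule_format])
        then show ?thesis using False by simp
      qed
    qed
  next
    case False
    define c where "c = Re (X a a)"
    have Xaa: "X a a = complex_of_real c" using dIm by (simp add: c_def complex_eq_iff)
    have cpos: "c > 0" using False dRe Xaa by auto
    define X' where "X' = (\<lambda>x y. X x y - X x a * X a y / X a a)"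
    have pX': "psd J X'"
      unfolding psd_def
    proof
      fix v :: "_ \<Rightarrow> complex"
      define S where "S = (\<Sum>y\<in>J. X a y * v y)"
      have S': "(\<Sum>x\<in>J. cnj (v x) * X x a) = cnj S"
        unfolding S_def cnj_sum
      proof (rule sum.cong[OF refl])
        fix x assume "x \<in> J"
        then have "X x a = cnj (X a x)" using herm[OF aI, of x] by simp
        then show "cnj (v x) * X x a = cnj (X a x * v x)" by simp
      qed
      define t where "t = - S / X a a"
      have "qf (insert a J) X (v(a := t)) = qf J X (v(a:=t)) + cnj t * S + cnj S * t + cnj t * X a a * t"
      proof -
        have neq: "\<And>x. x \<in> J \<Longrightarrow> (x = a) = False" using insert(2) by auto
        have e1: "(\<Sum>y\<in>J. X a y * (v(a:=t)) y) = S" unfolding S_def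
          by (rule sum.cong) (auto simp: neq)
        have e2: "(\<Sum>x\<in>J. cnj ((v(a:=t)) x) * X x a) = cnj S" unfolding S'[symmetric]
          by (rule sum.cong) (auto simp: neq)
        show ?thesis using qf_insert[OF insert(1,2), of X "v(a:=t)"] e1 e2 by simp
      qed
      also have "qf J X (v(a:=t)) = qf J X v" unfolding qf_def using insert(2)
        by (intro sum.cong refl) auto
      also have "qf J X v + cnj t * S + cnj S * t + cnj t * X a a * t = qf J X v - cnj S * S / X a a"
        using cpos by (simp add: t_def Xaa field_simps)
      also have "qf J X v - cnj S * S / X a a = qf J X' v"
      proof -
        have "qf J X' v = qf J X v - (\<Sum>x\<in>J. cnj (v x) * X x a) * S / X a a"
          unfolding qf_def X'_def S_def
          by (simp add: sum_subtractf sum_distrib_left sum_distrib_right sum_divide_distrib algebra_simps)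
        then show ?thesis using S' by simp
      qed
      finally show "Im (\<Sum>x\<in>J. \<Sum>y\<in>J. cnj (v x) * X' x y * v y) = 0 \<and>
          0 \<le> Re (\<Sum>x\<in>J. \<Sum>y\<in>J. cnj (v x) * X' x y * v y)"
        using psd_qf[OF insert(4), of "v(a:=t)"] unfolding qf_def by simp
    qed
    obtain n and u :: "nat \<Rightarrow> _ \<Rightarrow> complex" where u: "\<forall>x\<in>J. \<forall>y\<in>J. X' x y = (\<Sum>k<n. u k x * cnj (u k y))"
      using insert(3)[OF pX'] by blast
    define u0 where "u0 = (\<lambda>x. X x a / complex_of_real (sqrt c))"
    have u0: "u0 x * cnj (u0 y) = X x a * X a y / X a a" if "x \<in> insert a J" "y \<in> insert a J" for x y
    proof -
      have "u0 x * cnj (u0 y) = X x a * cnj (X y a) / (complex_of_real (sqrt c) * complex_of_real (sqrt c))"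
        by (simp add: u0_def)
      also have "complex_of_real (sqrt c) * complex_of_real (sqrt c) = X a a"
        using cpos Xaa by (simp flip: of_real_mult)
      finally show ?thesis using herm[OF that(2) aI] by simp
    qed
    define u' where "u' = (\<lambda>k. if k < n then (u k)(a := 0) else u0)"
    show ?thesis
    proof (rule exI[of _ "Suc n"], rule exI[of _ u'], intro ballI)
      fix x y assume xI: "x \<in> insert a J" and yI: "y \<in> insert a J"
      have "(\<Sum>k<Suc n. u' k x * cnj (u' k y)) = (\<Sum>k<n. ((u k)(a:=0)) x * cnj (((u k)(a:=0)) y)) + u0 x * cnj (u0 y)"
        by (simp add: u'_def)
      also have "\<dots> = X x y"
      proof (cases "x = a \<or> y = a")
        case True
        then show ?thesis using u0[OF xI yI] Xaa cpos by auto
      next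
        case False
        then have "x \<in> J" "y \<in> J" using xI yI by auto
        then have "X' x y = (\<Sum>k<n. u k x * cnj (u k y))" by (rule u[rule_format])
        then show ?thesis using u0[OF xI yI] False by (simp add: X'_def algebra_simps)
      qed
      finally show "X x y = (\<Sum>k<Suc n. u' k x * cnj (u' k y))" by simp
    qed
  qed
qed

lemma sum_times: "sum f (A \<times> B) = (\<Sum>a\<in>A. \<Sum>b\<in>B. f (a, b))"
  by (simp add: sum.cartesian_product)

lemma if0_mult: "(if P then x else 0) * y = (if P then x * y else (0::complex))"
  "y * (if P then x else 0) = (if P then y * x else (0::complex))"
  by auto

lemma if_conj0: "(if P \<and> Q then x else (0::complex)) = (if P then (if Q then x else 0) else 0)"
  by auto

lemma sum_if_const: "(\<Sum>y\<in>S. if P then g y else (0::complex)) = (if P then (\<Sum>y\<in>S. g y) else 0)"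
  by auto

lemma Mext_pt: "Mext M (p1,p2,a1,a2,t,b) (q1,q2,c1,c2,s,e) =
   M (a1,a2,t) (c1,c2,s) * (if p1 = q1 then (if p2 = q2 then (if b = e then 1 else 0) else 0) else 0)"
  by (simp add: Mext_def idop_def)

lemma Omega_pt: "Omega d \<rho> (p1,p2,a1,a2,t,b) (q1,q2,c1,c2,s,e) =
   (if p1 = a1 then (if q1 = c1 then (if p2 = a2 then (if q2 = c2 then \<rho> (t,b) (s,e) / (of_nat d)^2 else 0) else 0) else 0) else 0)"
  by (simp add: Omega_def psi_plus_def power2_eq_square)

lemma prodA:
  assumes "p1 < d" "p2 < d" "b < d"
  shows "mmul (Sys6 d) (Mext M) (Omega d \<rho>) (p1,p2,a1,a2,t,b) (q1,q2,c1,c2,s,e) =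
    (if q1 = c1 \<and> q2 = c2 then (\<Sum>s'<d. M (a1,a2,t) (p1,p2,s') * \<rho> (s',b) (s,e)) / (of_nat d)^2 else 0)"
  using assms
  apply (simp add: mmul_def Sys6_def sum_times Mext_pt Omega_pt if0_mult sum_if_const sum.delta sum.delta'
     sum_divide_distrib)
  done

lemma redB1:
  assumes "p < d" "b < d" "q < d"
  shows "reduce d 1 (mmul (Sys6 d) (Mext M) (Omega d \<rho>)) (p,b) (q,e) =
    (\<Sum>r<d. \<Sum>t<d. \<Sum>s<d. M (q,r,t) (p,r,s) * \<rho> (s,b) (t,e)) / (of_nat d)^2"
proof -
  have "reduce d 1 (mmul (Sys6 d) (Mext M) (Omega d \<rho>)) (p,b) (q,e) =
     (\<Sum>r<d. \<Sum>a1<d. \<Sum>a2<d. \<Sum>t<d.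
        (if q = a1 \<and> r = a2 then (\<Sum>s'<d. M (a1,a2,t) (p,r,s') * \<rho> (s',b) (t,e)) / (of_nat d)^2 else 0))"
    unfolding reduce_def using assms by (simp add: prodA)
  also have "\<dots> = (\<Sum>r<d. \<Sum>t<d. \<Sum>s<d. M (q,r,t) (p,r,s) * \<rho> (s,b) (t,e)) / (of_nat d)^2"
    using assms by (simp add: if_conj0 sum_if_const sum.delta sum.delta' sum_divide_distrib cong: if_cong)
  finally show ?thesis .
qed

lemma redB2:
  assumes "p < d" "b < d" "q < d"
  shows "reduce d 2 (mmul (Sys6 d) (Mext M) (Omega d \<rho>)) (p,b) (q,e) =
    (\<Sum>r<d. \<Sum>t<d. \<Sum>s<d. M (r,q,t) (r,p,s) * \<rho> (s,b) (t,e)) / (of_nat d)^2"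
proof -
  have "reduce d 2 (mmul (Sys6 d) (Mext M) (Omega d \<rho>)) (p,b) (q,e) =
     (\<Sum>r<d. \<Sum>a1<d. \<Sum>a2<d. \<Sum>t<d.
        (if r = a1 \<and> q = a2 then (\<Sum>s'<d. M (a1,a2,t) (r,p,s') * \<rho> (s',b) (t,e)) / (of_nat d)^2 else 0))"
    unfolding reduce_def using assms by (simp add: prodA)
  also have "\<dots> = (\<Sum>r<d. \<Sum>t<d. \<Sum>s<d. M (r,q,t) (r,p,s) * \<rho> (s,b) (t,e)) / (of_nat d)^2"
    using assms by (simp add: if_conj0 sum_if_const sum.delta sum.delta' sum_divide_distrib cong: if_cong)
  finally show ?thesis .
qed

lemma trace_psi:
  "trace (D d \<times> D d) (mmul (D d \<times> D d) (psi_plus d) (conjB d W Y)) =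
    (\<Sum>p<d. \<Sum>q<d. \<Sum>b<d. \<Sum>e<d. W q b * Y (q,b) (p,e) * cnj (W p e)) / of_nat d"
  by (simp add: trace_def mmul_def sum_times psi_plus_def conjB_def if_conj0 if0_mult sum_if_const
     sum.delta sum.delta' sum_divide_distrib)

definition G1 :: "nat \<Rightarrow> nat op \<Rightarrow> (nat\<times>nat\<times>nat) op \<Rightarrow> (nat\<times>nat) op \<Rightarrow> complex" where
  "G1 d W M \<rho> = (\<Sum>p<d. \<Sum>q<d. \<Sum>b<d. \<Sum>e<d.
      W q b * (\<Sum>r<d. \<Sum>t<d. \<Sum>s<d. M (p,r,t) (q,r,s) * \<rho> (s,b) (t,e)) * cnj (W p e))"

definition G2 :: "nat \<Rightarrow> nat op \<Rightarrow> (nat\<times>nat\<times>nat) op \<Rightarrow> (nat\<times>nat) op \<Rightarrow> complex" where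
  "G2 d W M \<rho> = (\<Sum>p<d. \<Sum>q<d. \<Sum>b<d. \<Sum>e<d.
      W q b * (\<Sum>r<d. \<Sum>t<d. \<Sum>s<d. M (r,p,t) (r,q,s) * \<rho> (s,b) (t,e)) * cnj (W p e))"

lemma F1_closed: "Fj d \<rho> K M U 1 = (\<Sum>i<K. G1 d (U i 1) (M i) \<rho>) / (of_nat d)^3"
proof -
  have "Fj d \<rho> K M U 1 = (\<Sum>i<K. (\<Sum>p<d. \<Sum>q<d. \<Sum>b<d. \<Sum>e<d. U i 1 q b *
       ((\<Sum>r<d. \<Sum>t<d. \<Sum>s<d. M i (p,r,t) (q,r,s) * \<rho> (s,b) (t,e)) / (of_nat d)^2) * cnj (U i 1 p e)) / of_nat d)"
    unfolding Fj_def trace_psi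
    by (intro sum.cong refl arg_cong2[where f="(/)"] arg_cong2[where f="(*)"]) (simp add: redB1[unfolded One_nat_def])
  then show ?thesis unfolding G1_def
    by (simp add: sum_divide_distrib sum_distrib_left sum_distrib_right power3_eq_cube power2_eq_square mult_ac)
qed

lemma F2_closed: "Fj d \<rho> K M U 2 = (\<Sum>i<K. G2 d (U i 2) (M i) \<rho>) / (of_nat d)^3"
proof -
  have "Fj d \<rho> K M U 2 = (\<Sum>i<K. (\<Sum>p<d. \<Sum>q<d. \<Sum>b<d. \<Sum>e<d. U i 2 q b *
       ((\<Sum>r<d. \<Sum>t<d. \<Sum>s<d. M i (r,p,t) (r,q,s) * \<rho> (s,b) (t,e)) / (of_nat d)^2) * cnj (U i 2 p e)) / of_nat d)"
    unfolding Fj_def trace_psi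
    by (intro sum.cong refl arg_cong2[where f="(/)"] arg_cong2[where f="(*)"]) (simp add: redB2)
  then show ?thesis unfolding G2_def
    by (simp add: sum_divide_distrib sum_distrib_left sum_distrib_right power3_eq_cube power2_eq_square mult_ac)
qed

lemma reorder7:
  "(\<Sum>p\<in>S. \<Sum>q\<in>S. \<Sum>b\<in>S. \<Sum>e\<in>S. \<Sum>r\<in>S. \<Sum>t\<in>S. \<Sum>s\<in>S. f p q b e r t s) =
   (\<Sum>r\<in>S. \<Sum>p\<in>S. \<Sum>q\<in>S. \<Sum>e\<in>S. \<Sum>b\<in>S. \<Sum>t\<in>S. \<Sum>s\<in>S. (f p q b e r t s :: complex))"
proof -
  have L: "(\<Sum>p\<in>S. \<Sum>q\<in>S. \<Sum>b\<in>S. \<Sum>e\<in>S. \<Sum>r\<in>S. \<Sum>t\<in>S. \<Sum>s\<in>S. f p q b e r t s) =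
     (\<Sum>(p,q,b,e,r,t,s)\<in>S\<times>S\<times>S\<times>S\<times>S\<times>S\<times>S. f p q b e r t s)"
    by (simp add: sum_times)
  have R: "(\<Sum>r\<in>S. \<Sum>p\<in>S. \<Sum>q\<in>S. \<Sum>e\<in>S. \<Sum>b\<in>S. \<Sum>t\<in>S. \<Sum>s\<in>S. f p q b e r t s) =
     (\<Sum>(r,p,q,e,b,t,s)\<in>S\<times>S\<times>S\<times>S\<times>S\<times>S\<times>S. f p q b e r t s)"
    by (simp add: sum_times)
  show ?thesis unfolding L R
    by (rule sum.reindex_bij_witness[where i="\<lambda>(r,p,q,e,b,t,s). (p,q,b,e,r,t,s)"
          and j="\<lambda>(p,q,b,e,r,t,s). (r,p,q,e,b,t,s)"]) auto
qed

definition wv :: "nat \<Rightarrow> (nat\<times>nat\<times>nat \<Rightarrow> complex) \<Rightarrow> (nat\<times>nat \<Rightarrow> complex) \<Rightarrow> nat\<times>nat\<times>nat \<Rightarrow> complex" where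
  "wv d m rv = (\<lambda>(x1,x2,b). \<Sum>s<d. cnj (m (x1,x2,s)) * rv (s,b))"

definition A1 :: "nat \<Rightarrow> nat op \<Rightarrow> (nat\<times>nat\<times>nat \<Rightarrow> complex) \<Rightarrow> nat \<Rightarrow> complex" where
  "A1 d W w x2 = (\<Sum>q<d. \<Sum>b<d. W q b * w (q,x2,b))"

definition A2 :: "nat \<Rightarrow> nat op \<Rightarrow> (nat\<times>nat\<times>nat \<Rightarrow> complex) \<Rightarrow> nat \<Rightarrow> complex" where
  "A2 d W w x1 = (\<Sum>q<d. \<Sum>b<d. W q b * w (x1,q,b))"

lemma G1_rank1: "G1 d W (\<lambda>x y. m x * cnj (m y)) (\<lambda>x y. rv x * cnj (rv y)) =
    (\<Sum>x2<d. A1 d W (wv d m rv) x2 * cnj (A1 d W (wv d m rv) x2))"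
proof -
  have "G1 d W (\<lambda>x y. m x * cnj (m y)) (\<lambda>x y. rv x * cnj (rv y)) =
     (\<Sum>p<d. \<Sum>q<d. \<Sum>b<d. \<Sum>e<d. \<Sum>r<d. \<Sum>t<d. \<Sum>s<d.
        W q b * (m (p,r,t) * cnj (m (q,r,s)) * (rv (s,b) * cnj (rv (t,e)))) * cnj (W p e))"
    unfolding G1_def by (simp add: sum_distrib_left sum_distrib_right)
  also have "\<dots> = (\<Sum>r<d. \<Sum>p<d. \<Sum>q<d. \<Sum>e<d. \<Sum>b<d. \<Sum>t<d. \<Sum>s<d.
        W q b * (m (p,r,t) * cnj (m (q,r,s)) * (rv (s,b) * cnj (rv (t,e)))) * cnj (W p e))"
    by (rule reorder7)
  also have "\<dots> = (\<Sum>x2<d. A1 d W (wv d m rv) x2 * cnj (A1 d W (wv d m rv) x2))"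
    unfolding A1_def wv_def by (simp add: sum_distrib_left sum_distrib_right cnj_sum mult_ac)
  finally show ?thesis .
qed

lemma G2_rank1: "G2 d W (\<lambda>x y. m x * cnj (m y)) (\<lambda>x y. rv x * cnj (rv y)) =
    (\<Sum>x1<d. A2 d W (wv d m rv) x1 * cnj (A2 d W (wv d m rv) x1))"
proof -
  have "G2 d W (\<lambda>x y. m x * cnj (m y)) (\<lambda>x y. rv x * cnj (rv y)) =
     (\<Sum>p<d. \<Sum>q<d. \<Sum>b<d. \<Sum>e<d. \<Sum>r<d. \<Sum>t<d. \<Sum>s<d.
        W q b * (m (r,p,t) * cnj (m (r,q,s)) * (rv (s,b) * cnj (rv (t,e)))) * cnj (W p e))"
    unfolding G2_def by (simp add: sum_distrib_left sum_distrib_right)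
  also have "\<dots> = (\<Sum>r<d. \<Sum>p<d. \<Sum>q<d. \<Sum>e<d. \<Sum>b<d. \<Sum>t<d. \<Sum>s<d.
        W q b * (m (r,p,t) * cnj (m (r,q,s)) * (rv (s,b) * cnj (rv (t,e)))) * cnj (W p e))"
    by (rule reorder7)
  also have "\<dots> = (\<Sum>x1<d. A2 d W (wv d m rv) x1 * cnj (A2 d W (wv d m rv) x1))"
    unfolding A2_def wv_def by (simp add: sum_distrib_left sum_distrib_right cnj_sum mult_ac)
  finally show ?thesis .
qed

lemma reorder9:
  "(\<Sum>p\<in>S. \<Sum>q\<in>S. \<Sum>b\<in>S. \<Sum>e\<in>S. \<Sum>r\<in>S. \<Sum>t\<in>S. \<Sum>s\<in>S. \<Sum>k\<in>KK. \<Sum>l\<in>LL. f p q b e r t s k l) =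
   (\<Sum>k\<in>KK. \<Sum>l\<in>LL. \<Sum>p\<in>S. \<Sum>q\<in>S. \<Sum>b\<in>S. \<Sum>e\<in>S. \<Sum>r\<in>S. \<Sum>t\<in>S. \<Sum>s\<in>S. (f p q b e r t s k l :: complex))"
proof -
  have L: "(\<Sum>p\<in>S. \<Sum>q\<in>S. \<Sum>b\<in>S. \<Sum>e\<in>S. \<Sum>r\<in>S. \<Sum>t\<in>S. \<Sum>s\<in>S. \<Sum>k\<in>KK. \<Sum>l\<in>LL. f p q b e r t s k l) =
     (\<Sum>(p,q,b,e,r,t,s,k,l)\<in>S\<times>S\<times>S\<times>S\<times>S\<times>S\<times>S\<times>KK\<times>LL. f p q b e r t s k l)"
    by (simp add: sum_times)
  have R: "(\<Sum>k\<in>KK. \<Sum>l\<in>LL. \<Sum>p\<in>S. \<Sum>q\<in>S. \<Sum>b\<in>S. \<Sum>e\<in>S. \<Sum>r\<in>S. \<Sum>t\<in>S. \<Sum>s\<in>S. f p q b e r t s k l) =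
     (\<Sum>(k,l,p,q,b,e,r,t,s)\<in>KK\<times>LL\<times>S\<times>S\<times>S\<times>S\<times>S\<times>S\<times>S. f p q b e r t s k l)"
    by (simp add: sum_times)
  show ?thesis unfolding L R
    by (rule sum.reindex_bij_witness[where i="\<lambda>(k,l,p,q,b,e,r,t,s). (p,q,b,e,r,t,s,k,l)"
          and j="\<lambda>(p,q,b,e,r,t,s,k,l). (k,l,p,q,b,e,r,t,s)"]) auto
qed

lemma G1_cong:
  assumes "\<forall>x\<in>D d \<times> D d \<times> D d. \<forall>y\<in>D d \<times> D d \<times> D d. M x y = M' x y"
    and "\<forall>x\<in>D d \<times> D d. \<forall>y\<in>D d \<times> D d. \<rho> x y = \<rho>' x y"
  shows "G1 d W M \<rho> = G1 d W M' \<rho>'" "G2 d W M \<rho> = G2 d W M' \<rho>'"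
  using assms unfolding G1_def G2_def by (auto intro!: sum.cong)

lemma G1_lin:
  "G1 d W (\<lambda>x y. \<Sum>k\<in>KK. m k x * cnj (m k y)) (\<lambda>x y. \<Sum>l\<in>LL. rv l x * cnj (rv l y)) =
   (\<Sum>k\<in>KK. \<Sum>l\<in>LL. G1 d W (\<lambda>x y. m k x * cnj (m k y)) (\<lambda>x y. rv l x * cnj (rv l y)))"
  unfolding G1_def
  by (simp add: sum_distrib_left sum_distrib_right reorder9 mult_ac)

lemma rot3: "(\<Sum>a\<in>A. \<Sum>b\<in>B. \<Sum>c\<in>C. f a b c) = (\<Sum>b\<in>B. \<Sum>c\<in>C. \<Sum>a\<in>A. (f a b c :: complex))"
proof -
  have "(\<Sum>a\<in>A. \<Sum>b\<in>B. \<Sum>c\<in>C. f a b c) = (\<Sum>b\<in>B. \<Sum>a\<in>A. \<Sum>c\<in>C. f a b c)" by (rule sum.swap)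
  also have "\<dots> = (\<Sum>b\<in>B. \<Sum>c\<in>C. \<Sum>a\<in>A. f a b c)" by (rule sum.cong[OF refl], rule sum.swap)
  finally show ?thesis .
qed

lemma norm_pres:
  fixes d :: nat and Q :: "nat \<Rightarrow> nat \<Rightarrow> complex" and x :: "nat \<Rightarrow> complex"
  assumes "\<forall>i<d. \<forall>j<d. (\<Sum>k<d. cnj (Q k i) * Q k j) = idop i j"
  shows "(\<Sum>k<d. (\<Sum>i<d. Q k i * x i) * cnj (\<Sum>j<d. Q k j * x j)) = (\<Sum>i<d. x i * cnj (x i))"
proof -
  have "(\<Sum>k<d. (\<Sum>i<d. Q k i * x i) * cnj (\<Sum>j<d. Q k j * x j)) =
      (\<Sum>k<d. \<Sum>j<d. \<Sum>i<d. x i * cnj (x j) * (Q k i * cnj (Q k j)))"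
    by (simp add: sum_distrib_left sum_distrib_right cnj_sum mult_ac)
  also have "\<dots> = (\<Sum>j<d. \<Sum>i<d. \<Sum>k<d. x i * cnj (x j) * (Q k i * cnj (Q k j)))"
    by (rule rot3)
  also have "\<dots> = (\<Sum>j<d. \<Sum>i<d. x i * cnj (x j) * idop i j)"
  proof (intro sum.cong refl)
    fix j i assume "i \<in> D d" "j \<in> D d"
    then have h: "(\<Sum>k<d. cnj (Q k i) * Q k j) = idop i j" using assms by auto
    have "(\<Sum>k<d. Q k i * cnj (Q k j)) = idop i j"
      using arg_cong[where f=cnj, OF h] by (simp add: cnj_sum idop_def mult.commute split: if_splits)
    then show "(\<Sum>k<d. x i * cnj (x j) * (Q k i * cnj (Q k j))) = x i * cnj (x j) * idop i j"
      by (simp add: sum_distrib_left[symmetric])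
  qed
  also have "\<dots> = (\<Sum>i<d. x i * cnj (x i))"
    by (simp add: idop_def if0_mult sum.delta')
  finally show ?thesis .
qed

lemma unit_rows:
  assumes "unitary_op (D d) U" "x < d"
  shows "(\<Sum>b<d. U x b * cnj (U x b)) = 1"
  using assms unfolding unitary_op_def mmul_def adj_def idop_def by auto

lemma unit_total:
  assumes "unitary_op (D d) U"
  shows "(\<Sum>x<d. \<Sum>b<d. U x b * cnj (U x b)) = of_nat d"
  using unit_rows[OF assms] by simp

lemma unit_Q1:
  assumes "unitary_op (D d) U"
  shows "\<forall>i<d. \<forall>j<d. (\<Sum>k<d. cnj ((\<lambda>b x1. U x1 b) k i) * (\<lambda>b x1. U x1 b) k j) = idop i j"
proof (intro allI impI)
  fix i j assume "i < d" "j < d"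
  then have "mmul (D d) U (adj U) j i = idop j i" using assms unfolding unitary_op_def by auto
  then show "(\<Sum>k<d. cnj ((\<lambda>b x1. U x1 b) k i) * (\<lambda>b x1. U x1 b) k j) = idop i j"
    unfolding mmul_def adj_def by (simp add: mult.commute idop_def split: if_splits)
qed

lemma unit_Q2:
  assumes "unitary_op (D d) V"
  shows "\<forall>i<d. \<forall>j<d. (\<Sum>k<d. cnj ((\<lambda>x2 b. cnj (V x2 b)) k i) * (\<lambda>x2 b. cnj (V x2 b)) k j) = idop i j"
proof (intro allI impI)
  fix i j assume "i < d" "j < d"
  then have "mmul (D d) (adj V) V j i = idop j i" using assms unfolding unitary_op_def by auto
  then show "(\<Sum>k<d. cnj ((\<lambda>x2 b. cnj (V x2 b)) k i) * (\<lambda>x2 b. cnj (V x2 b)) k j) = idop i j"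
    unfolding mmul_def adj_def by (simp add: mult.commute idop_def split: if_splits)
qed

lemma amgm_c:
  assumes "t > 0"
  shows "2 * Re (cnj a * g) \<le> t * Re (a * cnj a) + Re (g * cnj g) / t"
proof -
  have "0 \<le> ((t * Re a - Re g)^2 + (t * Im a - Im g)^2) / t" using assms by simp
  also have "\<dots> = t * Re (a * cnj a) + Re (g * cnj g) / t - 2 * Re (cnj a * g)"
    using assms by (simp add: field_simps power2_eq_square)
  finally show ?thesis by simp
qed

lemma re_sq: "Re (a * cnj a) \<ge> 0"
  by (simp add: power2_eq_square[symmetric])

lemma expand_sq:
  fixes a b :: real
  shows "Re ((w - (of_real a * u + of_real b * v)) * cnj (w - (of_real a * u + of_real b * v))) =
    Re (w * cnj w) - 2 * a * Re (cnj u * w) - 2 * b * Re (cnj v * w) + a^2 * Re (u * cnj u)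
    + b^2 * Re (v * cnj v) + 2 * a * b * Re (cnj u * v)"
  by (simp add: algebra_simps power2_eq_square)

lemma F1id:
  "(\<Sum>x1<d. \<Sum>x2<d. \<Sum>b<d. cnj (A1 d U w x2 * cnj (U x1 b) / of_nat d) * w (x1,x2,b)) =
   (\<Sum>x2<d. A1 d U w x2 * cnj (A1 d U w x2)) / of_nat d"
proof -
  have "(\<Sum>x1<d. \<Sum>x2<d. \<Sum>b<d. cnj (A1 d U w x2 * cnj (U x1 b) / of_nat d) * w (x1,x2,b)) =
     (\<Sum>x2<d. \<Sum>x1<d. \<Sum>b<d. cnj (A1 d U w x2 * cnj (U x1 b) / of_nat d) * w (x1,x2,b))"
    by (rule sum.swap)
  also have "\<dots> = (\<Sum>x2<d. cnj (A1 d U w x2) / of_nat d * A1 d U w x2)"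
  proof (rule sum.cong[OF refl])
    fix x2
    have "(\<Sum>x1<d. \<Sum>b<d. cnj (A1 d U w x2 * cnj (U x1 b) / of_nat d) * w (x1,x2,b)) =
       (\<Sum>x1<d. \<Sum>b<d. cnj (A1 d U w x2) / of_nat d * (U x1 b * w (x1,x2,b)))"
      by (simp add: mult_ac)
    also have "\<dots> = cnj (A1 d U w x2) / of_nat d * A1 d U w x2"
      unfolding A1_def[of d U w x2] by (simp add: sum_distrib_left)
    finally show "(\<Sum>x1<d. \<Sum>b<d. cnj (A1 d U w x2 * cnj (U x1 b) / of_nat d) * w (x1,x2,b)) =
       cnj (A1 d U w x2) / of_nat d * A1 d U w x2" .
  qed
  finally show ?thesis by (simp add: sum_divide_distrib mult_ac)
qed

lemma F2id:
  "(\<Sum>x1<d. \<Sum>x2<d. \<Sum>b<d. cnj (A2 d V w x1 * cnj (V x2 b) / of_nat d) * w (x1,x2,b)) =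
   (\<Sum>x1<d. A2 d V w x1 * cnj (A2 d V w x1)) / of_nat d"
proof -
  have "(\<Sum>x1<d. \<Sum>x2<d. \<Sum>b<d. cnj (A2 d V w x1 * cnj (V x2 b) / of_nat d) * w (x1,x2,b)) =
     (\<Sum>x1<d. cnj (A2 d V w x1) / of_nat d * A2 d V w x1)"
  proof (rule sum.cong[OF refl])
    fix x1
    have "(\<Sum>x2<d. \<Sum>b<d. cnj (A2 d V w x1 * cnj (V x2 b) / of_nat d) * w (x1,x2,b)) =
       (\<Sum>x2<d. \<Sum>b<d. cnj (A2 d V w x1) / of_nat d * (V x2 b * w (x1,x2,b)))"
      by (simp add: mult_ac)
    also have "\<dots> = cnj (A2 d V w x1) / of_nat d * A2 d V w x1"
      unfolding A2_def[of d V w x1] by (simp add: sum_distrib_left)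
    finally show "(\<Sum>x2<d. \<Sum>b<d. cnj (A2 d V w x1 * cnj (V x2 b) / of_nat d) * w (x1,x2,b)) =
       cnj (A2 d V w x1) / of_nat d * A2 d V w x1" .
  qed
  then show ?thesis by (simp add: sum_divide_distrib mult_ac)
qed

lemma F3id:
  assumes "unitary_op (D d) U"
  shows "(\<Sum>x1<d. \<Sum>x2<d. \<Sum>b<d. (\<alpha> x2 * cnj (U x1 b) / of_nat d) * cnj (\<alpha> x2 * cnj (U x1 b) / of_nat d)) =
   (\<Sum>x2<d. \<alpha> x2 * cnj (\<alpha> x2)) / of_nat d"
proof -
  have "(\<Sum>x1<d. \<Sum>x2<d. \<Sum>b<d. (\<alpha> x2 * cnj (U x1 b) / of_nat d) * cnj (\<alpha> x2 * cnj (U x1 b) / of_nat d)) =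
     (\<Sum>x2<d. \<Sum>x1<d. \<Sum>b<d. (\<alpha> x2 * cnj (U x1 b) / of_nat d) * cnj (\<alpha> x2 * cnj (U x1 b) / of_nat d))"
    by (rule sum.swap)
  also have "\<dots> = (\<Sum>x2<d. \<alpha> x2 * cnj (\<alpha> x2) / (of_nat d)^2 * (\<Sum>x1<d. \<Sum>b<d. U x1 b * cnj (U x1 b)))"
    by (rule sum.cong[OF refl]) (simp add: sum_distrib_left sum_divide_distrib power2_eq_square mult_ac)
  also have "\<dots> = (\<Sum>x2<d. \<alpha> x2 * cnj (\<alpha> x2) / of_nat d)"
    unfolding unit_total[OF assms] by (simp add: power2_eq_square)
  finally show ?thesis by (simp add: sum_divide_distrib)
qed

lemma F4id:
  assumes "unitary_op (D d) V"
  shows "(\<Sum>x1<d. \<Sum>x2<d. \<Sum>b<d. (\<beta> x1 * cnj (V x2 b) / of_nat d) * cnj (\<beta> x1 * cnj (V x2 b) / of_nat d)) =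
   (\<Sum>x1<d. \<beta> x1 * cnj (\<beta> x1)) / of_nat d"
proof -
  have "(\<Sum>x1<d. \<Sum>x2<d. \<Sum>b<d. (\<beta> x1 * cnj (V x2 b) / of_nat d) * cnj (\<beta> x1 * cnj (V x2 b) / of_nat d)) =
     (\<Sum>x1<d. \<beta> x1 * cnj (\<beta> x1) / (of_nat d)^2 * (\<Sum>x2<d. \<Sum>b<d. V x2 b * cnj (V x2 b)))"
    by (rule sum.cong[OF refl]) (simp add: sum_distrib_left sum_divide_distrib power2_eq_square mult_ac)
  also have "\<dots> = (\<Sum>x1<d. \<beta> x1 * cnj (\<beta> x1) / of_nat d)"
    unfolding unit_total[OF assms] by (simp add: power2_eq_square)
  finally show ?thesis by (simp add: sum_divide_distrib)
qed

lemma F5id: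
  "(\<Sum>x1<d. \<Sum>x2<d. \<Sum>b<d. cnj (\<alpha> x2 * cnj (U x1 b) / of_nat d) * (\<beta> x1 * cnj (V x2 b) / of_nat d)) =
   (\<Sum>x2<d. cnj (\<alpha> x2) * (\<Sum>b<d. cnj (V x2 b) * (\<Sum>x1<d. U x1 b * \<beta> x1))) / (of_nat d)^2"
proof -
  have "(\<Sum>x1<d. \<Sum>x2<d. \<Sum>b<d. cnj (\<alpha> x2 * cnj (U x1 b) / of_nat d) * (\<beta> x1 * cnj (V x2 b) / of_nat d)) =
     (\<Sum>x2<d. \<Sum>b<d. \<Sum>x1<d. cnj (\<alpha> x2 * cnj (U x1 b) / of_nat d) * (\<beta> x1 * cnj (V x2 b) / of_nat d))"
    by (rule rot3)
  also have "\<dots> = (\<Sum>x2<d. cnj (\<alpha> x2) * (\<Sum>b<d. cnj (V x2 b) * (\<Sum>x1<d. U x1 b * \<beta> x1)) / (of_nat d)^2)"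
    by (rule sum.cong[OF refl]) (simp add: sum_distrib_left sum_divide_distrib power2_eq_square mult_ac)
  finally show ?thesis by (simp add: sum_divide_distrib)
qed

definition lam :: "nat \<Rightarrow> real \<Rightarrow> real" where
  "lam d p = 1 / 2 * (1 + sqrt (1 + 4 * (real d ^ 2 - 1) * (p - 1) * p / real d ^ 2))"

lemma lam_facts:
  assumes "d \<ge> 2" "0 \<le> p" "p \<le> 1"
  shows "lam d p > 0" "(lam d p - p) * (lam d p - 1 + p) = p * (1 - p) / real d ^ 2"
    "lam d p \<ge> p" "lam d p \<ge> 1 - p" "0 < p \<Longrightarrow> p < 1 \<Longrightarrow> lam d p > p"
proof -
  define D where "D = 1 + 4 * (real d ^ 2 - 1) * (p - 1) * p / real d ^ 2"
  have dpos: "real d ^ 2 > 0" using assms by simp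
  have Deq: "D = (2 * p - 1)^2 + 4 * p * (1 - p) / real d ^ 2"
    unfolding D_def using dpos assms(1) by (simp add: power2_eq_square divide_simps) (simp add: algebra_simps)
  have pp: "p * (1 - p) \<ge> 0" using assms by simp
  have Dge: "D \<ge> (2 * p - 1)^2" unfolding Deq using pp dpos by (simp add: divide_nonneg_pos)
  then have D0: "D \<ge> 0" by (meson order_trans zero_le_power2)
  have sq: "sqrt D * sqrt D = D" using D0 by simp
  have sge: "sqrt D \<ge> \<bar>2 * p - 1\<bar>" using Dge real_sqrt_abs real_sqrt_le_mono by metis
  have l: "lam d p = (1 + sqrt D) / 2" unfolding lam_def D_def by simp
  show "lam d p > 0" unfolding l using D0 by (simp add: add_pos_nonneg)
  show "lam d p \<ge> p" "lam d p \<ge> 1 - p" unfolding l using sge by (auto simp: abs_if split: if_splits)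
  show "(lam d p - p) * (lam d p - 1 + p) = p * (1 - p) / real d ^ 2"
  proof -
    have "(lam d p - p) * (lam d p - 1 + p) = (sqrt D * sqrt D - (2*p - 1)^2) / 4"
      unfolding l by (simp add: field_simps power2_eq_square)
    also have "\<dots> = (D - (2*p - 1)^2) / 4" using sq by simp
    also have "\<dots> = p * (1 - p) / real d ^ 2" unfolding Deq by simp
    finally show ?thesis .
  qed
  assume "0 < p" "p < 1"
  then have "4 * p * (1 - p) / real d ^ 2 > 0" using dpos by simp
  then have "D > (2 * p - 1)^2" unfolding Deq by simp
  then have "sqrt D > \<bar>2 * p - 1\<bar>" using real_sqrt_abs real_sqrt_less_mono by metis
  then show "lam d p > p" unfolding l by (auto simp: abs_if split: if_splits)
qed

lemma core:
  fixes d :: nat and p :: real and U V :: "nat op" and w :: "nat \<times> nat \<times> nat \<Rightarrow> complex"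
  assumes d2: "d \<ge> 2" and p0: "0 \<le> p" and p1: "p \<le> 1"
    and uU: "unitary_op (D d) U" and uV: "unitary_op (D d) V"
  shows "p * Re (\<Sum>x2<d. A1 d U w x2 * cnj (A1 d U w x2)) + (1 - p) * Re (\<Sum>x1<d. A2 d V w x1 * cnj (A2 d V w x1))
     \<le> lam d p * real d * Re (\<Sum>x1<d. \<Sum>x2<d. \<Sum>b<d. w (x1,x2,b) * cnj (w (x1,x2,b)))"
proof -
  define L where "L = lam d p"
  have Lpos: "L > 0" and Lid: "(L - p) * (L - 1 + p) = p * (1 - p) / real d ^ 2"
    and Lp: "L \<ge> p" and Lq: "L \<ge> 1 - p" and Lstrict: "0 < p \<Longrightarrow> p < 1 \<Longrightarrow> L > p"
    using lam_facts[OF d2 p0 p1] unfolding L_def by auto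
  have dpos: "real d > 0" using d2 by simp
  define \<alpha> where "\<alpha> = A1 d U w"
  define \<beta> where "\<beta> = A2 d V w"
  define \<delta> where "\<delta> = (\<lambda>b. \<Sum>x1<d. U x1 b * \<beta> x1)"
  define \<gamma> where "\<gamma> = (\<lambda>x2. \<Sum>b<d. cnj (V x2 b) * \<delta> b)"
  define Ar where "Ar = Re (\<Sum>x2<d. \<alpha> x2 * cnj (\<alpha> x2))"
  define Br where "Br = Re (\<Sum>x1<d. \<beta> x1 * cnj (\<beta> x1))"
  define Nr where "Nr = Re (\<Sum>x1<d. \<Sum>x2<d. \<Sum>b<d. w (x1,x2,b) * cnj (w (x1,x2,b)))"
  have Ar0: "Ar \<ge> 0" unfolding Ar_def Re_sum by (intro sum_nonneg) (rule re_sq)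
  have Br0: "Br \<ge> 0" unfolding Br_def Re_sum by (intro sum_nonneg) (rule re_sq)
  define a where "a = p / L"
  define bb where "bb = (1 - p) / L"
  define uu where "uu = (\<lambda>x1 x2 b. \<alpha> x2 * cnj (U x1 b) / of_nat d)"
  define vv where "vv = (\<lambda>x1 x2 b. \<beta> x1 * cnj (V x2 b) / of_nat d)"
  define E where "E = (\<lambda>x1 x2 b. w (x1,x2,b) - (of_real a * uu x1 x2 b + of_real bb * vv x1 x2 b))"
  define S1 where "S1 = (\<Sum>x1<d. \<Sum>x2<d. \<Sum>b<d. Re (cnj (uu x1 x2 b) * w (x1,x2,b)))"
  define S2 where "S2 = (\<Sum>x1<d. \<Sum>x2<d. \<Sum>b<d. Re (cnj (vv x1 x2 b) * w (x1,x2,b)))"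
  define S3 where "S3 = (\<Sum>x1<d. \<Sum>x2<d. \<Sum>b<d. Re (uu x1 x2 b * cnj (uu x1 x2 b)))"
  define S4 where "S4 = (\<Sum>x1<d. \<Sum>x2<d. \<Sum>b<d. Re (vv x1 x2 b * cnj (vv x1 x2 b)))"
  define S5 where "S5 = (\<Sum>x1<d. \<Sum>x2<d. \<Sum>b<d. Re (cnj (uu x1 x2 b) * vv x1 x2 b))"
  have nonneg: "0 \<le> (\<Sum>x1<d. \<Sum>x2<d. \<Sum>b<d. Re (E x1 x2 b * cnj (E x1 x2 b)))"
    by (intro sum_nonneg) (rule re_sq)
  have expand: "(\<Sum>x1<d. \<Sum>x2<d. \<Sum>b<d. Re (E x1 x2 b * cnj (E x1 x2 b))) =
      Nr - 2 * a * S1 - 2 * bb * S2 + a^2 * S3 + bb^2 * S4 + 2 * a * bb * S5"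
    unfolding E_def expand_sq Nr_def S1_def S2_def S3_def S4_def S5_def Re_sum
    by (simp only: sum.distrib sum_subtractf sum_distrib_left[symmetric])
  have S1v: "S1 = Ar / real d"
  proof -
    have "S1 = Re (\<Sum>x1<d. \<Sum>x2<d. \<Sum>b<d. cnj (A1 d U w x2 * cnj (U x1 b) / of_nat d) * w (x1,x2,b))"
      unfolding S1_def Re_sum uu_def \<alpha>_def ..
    also have "\<dots> = Ar / real d" unfolding F1id Ar_def \<alpha>_def by simp
    finally show ?thesis .
  qed
  have S2v: "S2 = Br / real d"
  proof -
    have "S2 = Re (\<Sum>x1<d. \<Sum>x2<d. \<Sum>b<d. cnj (A2 d V w x1 * cnj (V x2 b) / of_nat d) * w (x1,x2,b))"
      unfolding S2_def Re_sum vv_def \<beta>_def ..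
    also have "\<dots> = Br / real d" unfolding F2id Br_def \<beta>_def by simp
    finally show ?thesis .
  qed
  have S3v: "S3 = Ar / real d"
  proof -
    have "S3 = Re (\<Sum>x1<d. \<Sum>x2<d. \<Sum>b<d. (\<alpha> x2 * cnj (U x1 b) / of_nat d) * cnj (\<alpha> x2 * cnj (U x1 b) / of_nat d))"
      unfolding S3_def Re_sum uu_def ..
    also have "\<dots> = Ar / real d" unfolding F3id[OF uU] Ar_def by simp
    finally show ?thesis .
  qed
  have S4v: "S4 = Br / real d"
  proof -
    have "S4 = Re (\<Sum>x1<d. \<Sum>x2<d. \<Sum>b<d. (\<beta> x1 * cnj (V x2 b) / of_nat d) * cnj (\<beta> x1 * cnj (V x2 b) / of_nat d))"
      unfolding S4_def Re_sum vv_def ..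
    also have "\<dots> = Br / real d" unfolding F4id[OF uV] Br_def by simp
    finally show ?thesis .
  qed
  have S5v: "S5 = Re (\<Sum>x2<d. cnj (\<alpha> x2) * \<gamma> x2) / real d ^ 2"
  proof -
    have "S5 = Re (\<Sum>x1<d. \<Sum>x2<d. \<Sum>b<d. cnj (\<alpha> x2 * cnj (U x1 b) / of_nat d) * (\<beta> x1 * cnj (V x2 b) / of_nat d))"
      unfolding S5_def Re_sum uu_def vv_def ..
    also have "\<dots> = Re (\<Sum>x2<d. cnj (\<alpha> x2) * \<gamma> x2) / real d ^ 2"
      unfolding F5id \<gamma>_def \<delta>_def by simp
    finally show ?thesis .
  qed
  have Gnorm: "Re (\<Sum>x2<d. \<gamma> x2 * cnj (\<gamma> x2)) = Br"
  proof -
    have "(\<Sum>x2<d. \<gamma> x2 * cnj (\<gamma> x2)) = (\<Sum>b<d. \<delta> b * cnj (\<delta> b))"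
      using norm_pres[OF unit_Q2[OF uV], of \<delta>] unfolding \<gamma>_def by simp
    also have "\<dots> = (\<Sum>x1<d. \<beta> x1 * cnj (\<beta> x1))"
      using norm_pres[OF unit_Q1[OF uU], of \<beta>] unfolding \<delta>_def by simp
    finally show ?thesis unfolding Br_def by simp
  qed
  have cross: "\<And>t. t > 0 \<Longrightarrow> 2 * Re (\<Sum>x2<d. cnj (\<alpha> x2) * \<gamma> x2) \<le> t * Ar + Br / t"
  proof -
    fix t :: real assume t: "t > 0"
    have "2 * Re (\<Sum>x2<d. cnj (\<alpha> x2) * \<gamma> x2) = (\<Sum>x2<d. 2 * Re (cnj (\<alpha> x2) * \<gamma> x2))"
      by (simp add: Re_sum sum_distrib_left)
    also have "\<dots> \<le> (\<Sum>x2<d. t * Re (\<alpha> x2 * cnj (\<alpha> x2)) + Re (\<gamma> x2 * cnj (\<gamma> x2)) / t)"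
      by (rule sum_mono) (rule amgm_c[OF t])
    also have "\<dots> = t * Ar + Br / t"
      unfolding Ar_def Gnorm[symmetric] Re_sum by (simp only: sum.distrib sum_distrib_left sum_divide_distrib)
    finally show "2 * Re (\<Sum>x2<d. cnj (\<alpha> x2) * \<gamma> x2) \<le> t * Ar + Br / t" .
  qed
  define R where "R = Re (\<Sum>x2<d. cnj (\<alpha> x2) * \<gamma> x2)"
  have h0: "0 \<le> Nr - 2 * a * (Ar / real d) - 2 * bb * (Br / real d) + a^2 * (Ar / real d)
      + bb^2 * (Br / real d) + 2 * a * bb * (R / real d ^ 2)"
    using nonneg unfolding expand S1v S2v S3v S4v S5v R_def .
  have "0 \<le> (L * real d) * (Nr - 2 * a * (Ar / real d) - 2 * bb * (Br / real d) + a^2 * (Ar / real d)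
      + bb^2 * (Br / real d) + 2 * a * bb * (R / real d ^ 2))"
    using h0 Lpos dpos by simp
  also have "\<dots> = L * real d * Nr - (2 * p - p^2 / L) * Ar - (2 * (1 - p) - (1 - p)^2 / L) * Br
      + 2 * p * (1 - p) * R / (L * real d)"
    using Lpos dpos by (simp add: a_def bb_def field_simps power2_eq_square)
  finally have h1: "0 \<le> L * real d * Nr - (2 * p - p^2 / L) * Ar - (2 * (1 - p) - (1 - p)^2 / L) * Br
      + 2 * p * (1 - p) * R / (L * real d)" .
  have crossb: "2 * p * (1 - p) * R / (L * real d) \<le> p * (L - p) / L * Ar + (1 - p) * (L - 1 + p) / L * Br"
  proof (cases "p = 0 \<or> p = 1")
    case True
    have "0 \<le> p * (L - p) / L * Ar" using Lp Lpos p0 Ar0 by simp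
    moreover have "0 \<le> (1 - p) * (L - 1 + p) / L * Br" using Lq Lpos p1 Br0 by simp
    ultimately show ?thesis using True by auto
  next
    case False
    then have pp0: "0 < p" and pp1: "p < 1" using p0 p1 by auto
    have Lgt: "L > p" using Lstrict[OF pp0 pp1] .
    define t where "t = (L - p) * real d / (1 - p)"
    have tpos: "t > 0" unfolding t_def using Lgt dpos pp1 by simp
    have c: "2 * R \<le> t * Ar + Br / t" using cross[OF tpos] unfolding R_def .
    have k: "p * (1 - p) / (L * real d) \<ge> 0" using pp0 pp1 Lpos dpos by simp
    have "2 * p * (1 - p) * R / (L * real d) = p * (1 - p) / (L * real d) * (2 * R)" by simp
    also have "\<dots> \<le> p * (1 - p) / (L * real d) * (t * Ar + Br / t)"
      by (rule mult_left_mono[OF c k])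
    also have "\<dots> = p * (1 - p) / (L * real d) * t * Ar + p * (1 - p) / (L * real d) / t * Br"
      using tpos Lpos dpos by (simp add: field_simps)
    also have "p * (1 - p) / (L * real d) * t = p * (L - p) / L"
      unfolding t_def using pp1 dpos Lpos by (simp add: field_simps)
    also have "p * (1 - p) / (L * real d) / t = (1 - p) * (L - 1 + p) / L"
    proof -
      have x: "L - 1 + p = p * (1 - p) / (real d ^ 2 * (L - p))"
        using Lid Lgt dpos by (simp add: field_simps)
      have "p * (1 - p) / (L * real d) / t = (1 - p) / L * (p * (1 - p) / (real d ^ 2 * (L - p)))"
        unfolding t_def using pp1 dpos Lpos Lgt by (simp add: field_simps power2_eq_square)
      then show ?thesis unfolding x[symmetric] by simp
    qed
    finally show ?thesis .
  qed
  have e1: "(2 * p - p^2 / L) * Ar - p * (L - p) / L * Ar = p * Ar"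
    using Lpos by (simp add: field_simps power2_eq_square)
  have e2: "(2 * (1 - p) - (1 - p)^2 / L) * Br - (1 - p) * (L - 1 + p) / L * Br = (1 - p) * Br"
    using Lpos by (simp add: field_simps power2_eq_square)
  have "p * Ar + (1 - p) * Br \<le> L * real d * Nr" using h1 crossb e1 e2 by linarith
  then show ?thesis unfolding Ar_def Br_def Nr_def L_def \<alpha>_def \<beta>_def .
qed

lemma G2_lin:
  "G2 d W (\<lambda>x y. \<Sum>k\<in>KK. m k x * cnj (m k y)) (\<lambda>x y. \<Sum>l\<in>LL. rv l x * cnj (rv l y)) =
   (\<Sum>k\<in>KK. \<Sum>l\<in>LL. G2 d W (\<lambda>x y. m k x * cnj (m k y)) (\<lambda>x y. rv l x * cnj (rv l y)))"
  unfolding G2_def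
  by (simp add: sum_distrib_left sum_distrib_right reorder9 mult_ac)

definition G0 :: "nat \<Rightarrow> (nat\<times>nat\<times>nat) op \<Rightarrow> (nat\<times>nat) op \<Rightarrow> complex" where
  "G0 d M \<rho> = (\<Sum>x1<d. \<Sum>x2<d. \<Sum>b<d. \<Sum>t<d. \<Sum>s<d. M (x1,x2,t) (x1,x2,s) * \<rho> (s,b) (t,b))"

lemma reorder52:
  "(\<Sum>p\<in>S. \<Sum>q\<in>S. \<Sum>b\<in>S. \<Sum>e\<in>S. \<Sum>r\<in>S. \<Sum>k\<in>KK. \<Sum>l\<in>LL. f p q b e r k l) =
   (\<Sum>k\<in>KK. \<Sum>l\<in>LL. \<Sum>p\<in>S. \<Sum>q\<in>S. \<Sum>b\<in>S. \<Sum>e\<in>S. \<Sum>r\<in>S. (f p q b e r k l :: complex))"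
proof -
  have L: "(\<Sum>p\<in>S. \<Sum>q\<in>S. \<Sum>b\<in>S. \<Sum>e\<in>S. \<Sum>r\<in>S. \<Sum>k\<in>KK. \<Sum>l\<in>LL. f p q b e r k l) =
     (\<Sum>(p,q,b,e,r,k,l)\<in>S\<times>S\<times>S\<times>S\<times>S\<times>KK\<times>LL. f p q b e r k l)"
    by (simp add: sum_times)
  have R: "(\<Sum>k\<in>KK. \<Sum>l\<in>LL. \<Sum>p\<in>S. \<Sum>q\<in>S. \<Sum>b\<in>S. \<Sum>e\<in>S. \<Sum>r\<in>S. f p q b e r k l) =
     (\<Sum>(k,l,p,q,b,e,r)\<in>KK\<times>LL\<times>S\<times>S\<times>S\<times>S\<times>S. f p q b e r k l)"
    by (simp add: sum_times)
  show ?thesis unfolding L R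
    by (rule sum.reindex_bij_witness[where i="\<lambda>(k,l,p,q,b,e,r). (p,q,b,e,r,k,l)"
          and j="\<lambda>(p,q,b,e,r,k,l). (k,l,p,q,b,e,r)"]) auto
qed

lemma reorder51:
  "(\<Sum>p\<in>S. \<Sum>q\<in>S. \<Sum>b\<in>S. \<Sum>e\<in>S. \<Sum>r\<in>S. \<Sum>k\<in>KK. f p q b e r k) =
   (\<Sum>k\<in>KK. \<Sum>p\<in>S. \<Sum>q\<in>S. \<Sum>b\<in>S. \<Sum>e\<in>S. \<Sum>r\<in>S. (f p q b e r k :: complex))"
proof -
  have L: "(\<Sum>p\<in>S. \<Sum>q\<in>S. \<Sum>b\<in>S. \<Sum>e\<in>S. \<Sum>r\<in>S. \<Sum>k\<in>KK. f p q b e r k) =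
     (\<Sum>(p,q,b,e,r,k)\<in>S\<times>S\<times>S\<times>S\<times>S\<times>KK. f p q b e r k)"
    by (simp add: sum_times)
  have R: "(\<Sum>k\<in>KK. \<Sum>p\<in>S. \<Sum>q\<in>S. \<Sum>b\<in>S. \<Sum>e\<in>S. \<Sum>r\<in>S. f p q b e r k) =
     (\<Sum>(k,p,q,b,e,r)\<in>KK\<times>S\<times>S\<times>S\<times>S\<times>S. f p q b e r k)"
    by (simp add: sum_times)
  show ?thesis unfolding L R
    by (rule sum.reindex_bij_witness[where i="\<lambda>(k,p,q,b,e,r). (p,q,b,e,r,k)"
          and j="\<lambda>(p,q,b,e,r,k). (k,p,q,b,e,r)"]) auto
qed

lemma G0_lin:
  "G0 d (\<lambda>x y. \<Sum>k\<in>KK. m k x * cnj (m k y)) (\<lambda>x y. \<Sum>l\<in>LL. rv l x * cnj (rv l y)) =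
   (\<Sum>k\<in>KK. \<Sum>l\<in>LL. G0 d (\<lambda>x y. m k x * cnj (m k y)) (\<lambda>x y. rv l x * cnj (rv l y)))"
  unfolding G0_def
  by (simp add: sum_distrib_left sum_distrib_right reorder52 mult_ac)

lemma G0_sum:
  "(\<Sum>i\<in>KK. G0 d (M i) \<rho>) = G0 d (\<lambda>x y. \<Sum>i\<in>KK. M i x y) \<rho>"
  unfolding G0_def
  by (simp add: sum_distrib_left sum_distrib_right reorder51 mult_ac)

lemma G0_rank1: "G0 d (\<lambda>x y. m x * cnj (m y)) (\<lambda>x y. rv x * cnj (rv y)) =
    (\<Sum>x1<d. \<Sum>x2<d. \<Sum>b<d. wv d m rv (x1,x2,b) * cnj (wv d m rv (x1,x2,b)))"
  unfolding G0_def wv_def by (simp add: sum_distrib_left sum_distrib_right cnj_sum mult_ac)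

lemma G0_cong:
  assumes "\<forall>x\<in>D d \<times> D d \<times> D d. \<forall>y\<in>D d \<times> D d \<times> D d. M x y = M' x y"
    and "\<forall>x\<in>D d \<times> D d. \<forall>y\<in>D d \<times> D d. \<rho> x y = \<rho>' x y"
  shows "G0 d M \<rho> = G0 d M' \<rho>'"
  using assms unfolding G0_def by (auto intro!: sum.cong)

lemma G0_id:
  assumes "trace (D d \<times> D d) \<rho> = 1"
  shows "G0 d idop \<rho> = (of_nat d)^2"
proof -
  have "G0 d idop \<rho> = (\<Sum>x1<d. \<Sum>x2<d. \<Sum>b<d. \<Sum>s<d. \<rho> (s,b) (s,b))"
    unfolding G0_def idop_def by (simp add: if0_mult sum.delta')
  also have "\<dots> = (\<Sum>x1<d. \<Sum>x2<d. trace (D d \<times> D d) \<rho>)"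
  proof (intro sum.cong refl)
    show "(\<Sum>b<d. \<Sum>s<d. \<rho> (s,b) (s,b)) = trace (D d \<times> D d) \<rho>"
      unfolding trace_def sum_times by (rule sum.swap)
  qed
  also have "\<dots> = (of_nat d)^2" using assms by (simp add: power2_eq_square)
  finally show ?thesis .
qed

theorem mainTheorem4:
  fixes d K :: nat and p :: real
    and \<rho> :: "(nat \<times> nat) op"
    and M :: "nat \<Rightarrow> (nat \<times> nat \<times> nat) op"
    and U :: "nat \<Rightarrow> nat \<Rightarrow> nat op"
  assumes "d \<ge> 2"
    and "0 \<le> p" and "p \<le> 1"
    and "is_state (D d \<times> D d) \<rho>"
    and "povm (D d \<times> D d \<times> D d) K M"
    and "\<forall>i<K. \<forall>j\<in>{1, 2}. unitary_op (D d) (U i j)"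
  shows "p * Re (Fj d \<rho> K M U 1) + (1 - p) * Re (Fj d \<rho> K M U 2)
           \<le> 1 / 2 * (1 + sqrt (1 + 4 * (real d ^ 2 - 1) * (p - 1) * p / real d ^ 2))"
proof -
  note d2 = assms(1) and p0 = assms(2) and p1 = assms(3)
  have dpos: "real d > 0" using d2 by simp
  have psdM: "\<forall>i<K. psd (D d \<times> D d \<times> D d) (M i)" and sumM: "\<forall>x\<in>D d \<times> D d \<times> D d. \<forall>y\<in>D d \<times> D d \<times> D d. (\<Sum>i<K. M i x y) = idop x y"
    using assms(5) unfolding povm_def by auto
  have psdR: "psd (D d \<times> D d) \<rho>" and trR: "trace (D d \<times> D d) \<rho> = 1"
    using assms(4) unfolding is_state_def by auto
  have h1: "\<forall>i. \<exists>n (u :: nat \<Rightarrow> nat \<times> nat \<times> nat \<Rightarrow> complex). i < K \<longrightarrow>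
      (\<forall>x\<in>D d \<times> D d \<times> D d. \<forall>y\<in>D d \<times> D d \<times> D d. M i x y = (\<Sum>k<n. u k x * cnj (u k y)))"
    using psd_decomp[of "D d \<times> D d \<times> D d"] psdM by auto
  obtain nM where h2: "\<forall>i. \<exists>(u :: nat \<Rightarrow> nat \<times> nat \<times> nat \<Rightarrow> complex). i < K \<longrightarrow>
      (\<forall>x\<in>D d \<times> D d \<times> D d. \<forall>y\<in>D d \<times> D d \<times> D d. M i x y = (\<Sum>k<nM i. u k x * cnj (u k y)))"
    using choice[OF h1] by blast
  obtain mm where h3: "\<forall>i. i < K \<longrightarrow>
      (\<forall>x\<in>D d \<times> D d \<times> D d. \<forall>y\<in>D d \<times> D d \<times> D d. M i x y = (\<Sum>k<nM i. mm i k x * cnj (mm i k y)))"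
    using choice[OF h2] by blast
  have dM: "\<And>i. i < K \<Longrightarrow>
      (\<forall>x\<in>D d \<times> D d \<times> D d. \<forall>y\<in>D d \<times> D d \<times> D d. M i x y = (\<Sum>k<nM i. mm i k x * cnj (mm i k y)))"
    using h3 by blast
  obtain nR and rr :: "nat \<Rightarrow> nat \<times> nat \<Rightarrow> complex" where
    dR: "\<forall>x\<in>D d \<times> D d. \<forall>y\<in>D d \<times> D d. \<rho> x y = (\<Sum>l<nR. rr l x * cnj (rr l y))"
    using psd_decomp[of "D d \<times> D d" \<rho>] psdR by auto
  define ww where "ww = (\<lambda>i k l. wv d (mm i k) (rr l))"
  define a1 where "a1 = (\<lambda>i k l. Re (\<Sum>x2<d. A1 d (U i 1) (ww i k l) x2 * cnj (A1 d (U i 1) (ww i k l) x2)))"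
  define a2 where "a2 = (\<lambda>i k l. Re (\<Sum>x1<d. A2 d (U i 2) (ww i k l) x1 * cnj (A2 d (U i 2) (ww i k l) x1)))"
  define nn where "nn = (\<lambda>i k l. Re (\<Sum>x1<d. \<Sum>x2<d. \<Sum>b<d. ww i k l (x1,x2,b) * cnj (ww i k l (x1,x2,b))))"
  have G1i: "G1 d (U i 1) (M i) \<rho> = (\<Sum>k<nM i. \<Sum>l<nR. \<Sum>x2<d. A1 d (U i 1) (ww i k l) x2 * cnj (A1 d (U i 1) (ww i k l) x2))"
    if "i < K" for i
  proof -
    have "G1 d (U i 1) (M i) \<rho> = G1 d (U i 1) (\<lambda>x y. \<Sum>k<nM i. mm i k x * cnj (mm i k y)) (\<lambda>x y. \<Sum>l<nR. rr l x * cnj (rr l y))"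
      by (rule G1_cong(1)) (use dM[OF that] dR in auto)
    also have "\<dots> = (\<Sum>k<nM i. \<Sum>l<nR. G1 d (U i 1) (\<lambda>x y. mm i k x * cnj (mm i k y)) (\<lambda>x y. rr l x * cnj (rr l y)))"
      by (rule G1_lin)
    finally show ?thesis unfolding G1_rank1 ww_def .
  qed
  have G2i: "G2 d (U i 2) (M i) \<rho> = (\<Sum>k<nM i. \<Sum>l<nR. \<Sum>x1<d. A2 d (U i 2) (ww i k l) x1 * cnj (A2 d (U i 2) (ww i k l) x1))"
    if "i < K" for i
  proof -
    have "G2 d (U i 2) (M i) \<rho> = G2 d (U i 2) (\<lambda>x y. \<Sum>k<nM i. mm i k x * cnj (mm i k y)) (\<lambda>x y. \<Sum>l<nR. rr l x * cnj (rr l y))"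
      by (rule G1_cong(2)) (use dM[OF that] dR in auto)
    also have "\<dots> = (\<Sum>k<nM i. \<Sum>l<nR. G2 d (U i 2) (\<lambda>x y. mm i k x * cnj (mm i k y)) (\<lambda>x y. rr l x * cnj (rr l y)))"
      by (rule G2_lin)
    finally show ?thesis unfolding G2_rank1 ww_def .
  qed
  have G0i: "G0 d (M i) \<rho> = (\<Sum>k<nM i. \<Sum>l<nR. \<Sum>x1<d. \<Sum>x2<d. \<Sum>b<d. ww i k l (x1,x2,b) * cnj (ww i k l (x1,x2,b)))"
    if "i < K" for i
  proof -
    have "G0 d (M i) \<rho> = G0 d (\<lambda>x y. \<Sum>k<nM i. mm i k x * cnj (mm i k y)) (\<lambda>x y. \<Sum>l<nR. rr l x * cnj (rr l y))"
      by (rule G0_cong) (use dM[OF that] dR in auto)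
    also have "\<dots> = (\<Sum>k<nM i. \<Sum>l<nR. G0 d (\<lambda>x y. mm i k x * cnj (mm i k y)) (\<lambda>x y. rr l x * cnj (rr l y)))"
      by (rule G0_lin)
    finally show ?thesis unfolding G0_rank1 ww_def .
  qed
  have ReF1: "Re (Fj d \<rho> K M U 1) = (\<Sum>i<K. \<Sum>k<nM i. \<Sum>l<nR. a1 i k l) / real d ^ 3"
  proof -
    have "Fj d \<rho> K M U 1 = (\<Sum>i<K. \<Sum>k<nM i. \<Sum>l<nR. \<Sum>x2<d. A1 d (U i 1) (ww i k l) x2 * cnj (A1 d (U i 1) (ww i k l) x2)) / (of_nat d)^3"
      unfolding F1_closed using G1i by simp
    then show ?thesis unfolding a1_def by (simp add: Re_sum)
  qed
  have ReF2: "Re (Fj d \<rho> K M U 2) = (\<Sum>i<K. \<Sum>k<nM i. \<Sum>l<nR. a2 i k l) / real d ^ 3"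
  proof -
    have "Fj d \<rho> K M U 2 = (\<Sum>i<K. \<Sum>k<nM i. \<Sum>l<nR. \<Sum>x1<d. A2 d (U i 2) (ww i k l) x1 * cnj (A2 d (U i 2) (ww i k l) x1)) / (of_nat d)^3"
      unfolding F2_closed using G2i by simp
    then show ?thesis unfolding a2_def by (simp add: Re_sum)
  qed
  have Nsum: "(\<Sum>i<K. \<Sum>k<nM i. \<Sum>l<nR. nn i k l) = real d ^ 2"
  proof -
    have "(\<Sum>i<K. G0 d (M i) \<rho>) = G0 d (\<lambda>x y. \<Sum>i<K. M i x y) \<rho>" by (rule G0_sum)
    also have "\<dots> = G0 d idop \<rho>" by (rule G0_cong) (use sumM in auto)
    also have "\<dots> = (of_nat d)^2" by (rule G0_id[OF trR])
    finally have "(\<Sum>i<K. G0 d (M i) \<rho>) = (of_nat d)^2" .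
    then have "(\<Sum>i<K. \<Sum>k<nM i. \<Sum>l<nR. \<Sum>x1<d. \<Sum>x2<d. \<Sum>b<d. ww i k l (x1,x2,b) * cnj (ww i k l (x1,x2,b)))
        = (of_nat d)^2" using G0i by simp
    then have c: "Re (\<Sum>i<K. \<Sum>k<nM i. \<Sum>l<nR. \<Sum>x1<d. \<Sum>x2<d. \<Sum>b<d. ww i k l (x1,x2,b) * cnj (ww i k l (x1,x2,b)))
        = real d ^ 2" by simp
    show ?thesis using c unfolding nn_def Re_sum .
  qed
  have core_i: "p * a1 i k l + (1 - p) * a2 i k l \<le> lam d p * real d * nn i k l" if "i < K" for i k l
    unfolding a1_def a2_def nn_def
    by (rule core[OF d2 p0 p1]) (use assms(6) that in auto)
  have "p * Re (Fj d \<rho> K M U 1) + (1 - p) * Re (Fj d \<rho> K M U 2) =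
      (\<Sum>i<K. \<Sum>k<nM i. \<Sum>l<nR. p * a1 i k l + (1 - p) * a2 i k l) / real d ^ 3"
    unfolding ReF1 ReF2 by (simp add: sum.distrib sum_distrib_left add_divide_distrib)
  also have "\<dots> \<le> (\<Sum>i<K. \<Sum>k<nM i. \<Sum>l<nR. lam d p * real d * nn i k l) / real d ^ 3"
    using dpos by (intro divide_right_mono sum_mono core_i) auto
  also have "\<dots> = lam d p * real d * real d ^ 2 / real d ^ 3"
    unfolding Nsum[symmetric] by (simp add: sum_distrib_left)
  also have "\<dots> = lam d p" using dpos by (simp add: power2_eq_square power3_eq_cube)
  finally show ?thesis unfolding lam_def .
qed

end
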